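(* Let $\mathcal H$ be an infinite-dimensional Hilbert space over $\mathbb C$. Let $X_1,\dots,X_\ell$ be variables for elements of $\mathcal B(\mathcal H)$, $\iota:[k]\to[\ell]$, $\tau:[k]\to\{1,*\}$, and $P=\prod_{i\in[k]}X_{\iota(i)}^{\tau(i)}$. Then $P$ is real-eigenvalued over $\mathcal H$ if and only if $P$ is self-adjoint.
   Context: $\mathcal B(\mathcal H)$ is the set of bounded linear operators $\mathcal H\to\mathcal H$, and $X^*$ denotes the adjoint operator. Formal adjoint acts on words by $(X_i^1)^*=X_i^*$, $(X_i^* )^*=X_i$, $(W_1W_2)^*=W_2^*W_1^*$. $P$ is real-eigenvalued over $\mathcal H$ if for every assignment of operators $A_1,\dots,A_\ell\in\mathcal B(\mathcal H)$ to $X_1,\dots,X_\ell$ (with $A_i^*$ substituted for $X_i^*$), every eigenvalue of the resulting product operator is real. $P$ is self-adjoint (a purely formal notion) if $k$ is even and there exists $j\in[k]$ such that, with indices modulo $k$, $\prod_{i=j+1}^{j+k}X_{\iota(i)}^{\tau(i)}=LL^*$ as formal words, where $L=\prod_{i=j+1}^{j+k/2}X_{\iota(i)}^{\tau(i)}$. *)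

theory Defs
  imports Complex_Main
begin

text \<open>A complex inner product space, complete w.r.t. the induced norm.
  Inner product is conjugate-linear in the first and linear in the second argument.\<close>

class complex_hilbert = ab_group_add +
  fixes scaleC :: "complex \<Rightarrow> 'a \<Rightarrow> 'a"
    and cinner :: "'a \<Rightarrow> 'a \<Rightarrow> complex"
  assumes scaleC_add_right: "scaleC a (x + y) = scaleC a x + scaleC a y"
    and scaleC_add_left: "scaleC (a + b) x = scaleC a x + scaleC b x"
    and scaleC_scaleC: "scaleC a (scaleC b x) = scaleC (a * b) x"
    and scaleC_one: "scaleC 1 x = x"
    and cinner_commute: "cinner x y = cnj (cinner y x)"
    and cinner_add_right: "cinner x (y + z) = cinner x y + cinner x z"
    and cinner_scaleC_right: "cinner x (scaleC a y) = a * cinner x y"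
    and cinner_self_nonneg: "Im (cinner x x) = 0 \<and> Re (cinner x x) \<ge> 0"
    and cinner_self_eq_zero: "cinner x x = 0 \<longleftrightarrow> x = 0"
    and cinner_complete:
      "(\<forall>e>0. \<exists>N::nat. \<forall>m\<ge>N. \<forall>n\<ge>N. sqrt (Re (cinner (X m - X n) (X m - X n))) < e)
        \<Longrightarrow> (\<exists>L. \<forall>e>0. \<exists>N::nat. \<forall>n\<ge>N. sqrt (Re (cinner (X n - L) (X n - L))) < e)"

definition cnorm :: "'a::complex_hilbert \<Rightarrow> real" where
  "cnorm x = sqrt (Re (cinner x x))"

definition infinite_dimensional :: "'a::complex_hilbert itself \<Rightarrow> bool" where
  "infinite_dimensional _ \<longleftrightarrow>
     \<not> (\<exists>B::'a set. finite B \<and> (\<forall>x. \<exists>c. x = (\<Sum>b\<in>B. scaleC (c b) b)))"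

definition bounded_op :: "('a::complex_hilbert \<Rightarrow> 'a) \<Rightarrow> bool" where
  "bounded_op A \<longleftrightarrow> (\<forall>x y. A (x + y) = A x + A y) \<and> (\<forall>c x. A (scaleC c x) = scaleC c (A x))
     \<and> (\<exists>K. \<forall>x. cnorm (A x) \<le> K * cnorm x)"

text \<open>Adjoint: the operator \<open>B\<close> with \<open>\<langle>A x, y\<rangle> = \<langle>x, B y\<rangle>\<close> (unique; exists for bounded \<open>A\<close>).\<close>
definition adjoint :: "('a::complex_hilbert \<Rightarrow> 'a) \<Rightarrow> ('a \<Rightarrow> 'a)" where
  "adjoint A = (SOME B. \<forall>x y. cinner (A x) y = cinner x (B y))"

definition eigenvalue :: "('a::complex_hilbert \<Rightarrow> 'a) \<Rightarrow> complex \<Rightarrow> bool" where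
  "eigenvalue A mu \<longleftrightarrow> (\<exists>x. x \<noteq> 0 \<and> A x = scaleC mu x)"

datatype exponent = One | Star

text \<open>A letter \<open>(i, t)\<close> stands for \<open>X_i^t\<close>; a word \<open>P = \<Prod>X_{\<iota>(i)}^{\<tau>(i)}\<close> is the list of letters.\<close>
type_synonym letter = "nat \<times> exponent"

fun flip_exp :: "exponent \<Rightarrow> exponent" where
  "flip_exp One = Star" | "flip_exp Star = One"

definition word_adj :: "letter list \<Rightarrow> letter list" where
  "word_adj w = rev (map (\<lambda>(i, t). (i, flip_exp t)) w)"

definition formally_self_adjoint :: "letter list \<Rightarrow> bool" where
  "formally_self_adjoint w \<longleftrightarrow> even (length w) \<and>
     (\<exists>j<length w. let r = rotate j w; L = take (length w div 2) r in r = L @ word_adj L)"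

fun apply_exp :: "('a::complex_hilbert \<Rightarrow> 'a) \<Rightarrow> exponent \<Rightarrow> ('a \<Rightarrow> 'a)" where
  "apply_exp A One = A" | "apply_exp A Star = adjoint A"

text \<open>The operator obtained by substituting \<open>A i\<close> for \<open>X_i\<close> (product = composition, leftmost factor outermost).\<close>
definition eval_word :: "(nat \<Rightarrow> ('a::complex_hilbert \<Rightarrow> 'a)) \<Rightarrow> letter list \<Rightarrow> ('a \<Rightarrow> 'a)" where
  "eval_word A w = foldr (\<lambda>(i, t) f. apply_exp (A i) t \<circ> f) w id"

definition real_eigenvalued :: "'a::complex_hilbert itself \<Rightarrow> nat \<Rightarrow> letter list \<Rightarrow> bool" where
  "real_eigenvalued _ l w \<longleftrightarrow>
     (\<forall>A :: nat \<Rightarrow> ('a \<Rightarrow> 'a). (\<forall>i<l. bounded_op (A i)) \<longrightarrow>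
        (\<forall>mu. eigenvalue (eval_word A w) mu \<longrightarrow> mu \<in> \<real>))"

end

theory Submission
  imports Defs "Jordan_Normal_Form.Schur_Decomposition"
begin



lemma scaleC_zero_left[simp]: "scaleC 0 x = 0"
proof -
  have "scaleC (0+0) x = scaleC 0 x + scaleC 0 x" by (rule scaleC_add_left)
  thus ?thesis by simp
qed

lemma scaleC_zero_right[simp]: "scaleC a 0 = 0"
proof -
  have "scaleC a (0+0) = scaleC a 0 + scaleC a 0" by (rule scaleC_add_right)
  thus ?thesis by simp
qed

lemma scaleC_minus_left: "scaleC (-a) x = - scaleC a x"
proof -
  have "scaleC (-a + a) x = scaleC (-a) x + scaleC a x" by (rule scaleC_add_left)
  thus ?thesis by (simp add: eq_neg_iff_add_eq_0)
qed

lemma scaleC_minus_right: "scaleC a (-x) = - scaleC a x"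
proof -
  have "scaleC a (-x + x) = scaleC a (-x) + scaleC a x" by (rule scaleC_add_right)
  thus ?thesis by (simp add: eq_neg_iff_add_eq_0)
qed

lemma scaleC_diff_right: "scaleC a (x - y) = scaleC a x - scaleC a y"
  using scaleC_add_right[of a x "-y"] by (simp add: scaleC_minus_right)

lemma scaleC_diff_left: "scaleC (a - b) x = scaleC a x - scaleC b x"
  using scaleC_add_left[of a "-b" x] by (simp add: scaleC_minus_left)

lemma scaleC_sum_right: "scaleC a (sum f A) = (\<Sum>i\<in>A. scaleC a (f i))"
  by (induction A rule: infinite_finite_induct) (auto simp: scaleC_add_right)

lemma scaleC_sum_left: "scaleC (sum f A) x = (\<Sum>i\<in>A. scaleC (f i) x)"
  by (induction A rule: infinite_finite_induct) (auto simp: scaleC_add_left)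

lemma cinner_zero_right[simp]: "cinner x 0 = 0"
  using cinner_add_right[of x 0 0] by simp

lemma cinner_zero_left[simp]: "cinner 0 x = 0"
  using cinner_commute[of 0 x] by simp

lemma cinner_add_left: "cinner (x + y) z = cinner x z + cinner y z"
  using cinner_commute[of "x+y" z] cinner_commute[of x z] cinner_commute[of y z]
  by (simp add: cinner_add_right)

lemma cinner_scaleC_left: "cinner (scaleC a x) y = cnj a * cinner x y"
  using cinner_commute[of "scaleC a x" y] cinner_commute[of x y]
  by (simp add: cinner_scaleC_right)

lemma cinner_minus_right: "cinner x (-y) = - cinner x y"
proof -
  have "cinner x (-y) + cinner x y = 0" using cinner_add_right[of x "-y" y] by simp
  hence "cinner x (-y) = 0 - cinner x y" by (rule add_implies_diff)
  thus ?thesis by simp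
qed

lemma cinner_minus_left: "cinner (-x) y = - cinner x y"
proof -
  have "cinner (-x) y + cinner x y = 0" using cinner_add_left[of "-x" x y] by simp
  hence "cinner (-x) y = 0 - cinner x y" by (rule add_implies_diff)
  thus ?thesis by simp
qed

lemma cinner_diff_right: "cinner x (y - z) = cinner x y - cinner x z"
  using cinner_add_right[of x y "-z"] by (simp add: cinner_minus_right)

lemma cinner_diff_left: "cinner (x - y) z = cinner x z - cinner y z"
  using cinner_add_left[of x "-y" z] by (simp add: cinner_minus_left)

lemma cinner_sum_right: "cinner x (sum f A) = (\<Sum>i\<in>A. cinner x (f i))"
  by (induction A rule: infinite_finite_induct) (auto simp: cinner_add_right)

lemma cinner_sum_left: "cinner (sum f A) x = (\<Sum>i\<in>A. cinner (f i) x)"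
  by (induction A rule: infinite_finite_induct) (auto simp: cinner_add_left)

lemma cinner_self_real: "cinner x x = complex_of_real (Re (cinner x x))"
  using cinner_self_nonneg[of x] by (simp add: complex_eq_iff)

lemma cinner_self_Re_nonneg: "Re (cinner x x) \<ge> 0"
  using cinner_self_nonneg[of x] by simp

lemma cinner_self_Re_eq_0: "Re (cinner x x) = 0 \<longleftrightarrow> x = 0"
  using cinner_self_real[of x] cinner_self_eq_zero[of x] by (metis of_real_0 zero_complex.sel(1))

lemma cinner_self_Re_pos: "x \<noteq> 0 \<Longrightarrow> Re (cinner x x) > 0"
  using cinner_self_Re_eq_0[of x] cinner_self_Re_nonneg[of x] by linarith


lemma cnorm_nonneg: "cnorm x \<ge> 0"
  unfolding cnorm_def using cinner_self_Re_nonneg[of x] by simp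

lemma cnorm_sq: "cnorm x ^ 2 = Re (cinner x x)"
  unfolding cnorm_def using cinner_self_Re_nonneg[of x] by simp

lemma cnorm_eq_0: "cnorm x = 0 \<longleftrightarrow> x = 0"
  unfolding cnorm_def using cinner_self_Re_eq_0 cinner_self_Re_nonneg by simp

lemma cnorm_zero[simp]: "cnorm 0 = 0"
  by (simp add: cnorm_eq_0)

lemma cinner_self_cnorm: "cinner x x = complex_of_real (cnorm x ^ 2)"
  using cinner_self_real cnorm_sq by metis

lemma cnorm_scaleC: "cnorm (scaleC c x) = cmod c * cnorm x"
proof -
  have "cinner (scaleC c x) (scaleC c x) = cnj c * c * cinner x x"
    by (simp add: cinner_scaleC_left cinner_scaleC_right)
  also have "cnj c * c = complex_of_real ((cmod c)^2)"
    by (metis complex_norm_square mult.commute)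
  finally have "Re (cinner (scaleC c x) (scaleC c x)) = (cmod c)^2 * Re (cinner x x)"
    using cinner_self_real[of x] by (metis Re_complex_of_real of_real_mult)
  thus ?thesis unfolding cnorm_def by (simp add: real_sqrt_mult)
qed

lemma cnorm_minus_commute: "cnorm (x - y) = cnorm (y - x)"
proof -
  have "y - x = scaleC (-1) (x - y)" by (simp add: scaleC_minus_left scaleC_one)
  thus ?thesis by (simp add: cnorm_scaleC)
qed

lemma cinner_expand: "cinner (x - scaleC t y) (x - scaleC t y) =
   cinner x x - t * cinner x y - cnj t * cinner y x + cnj t * t * cinner y y"
  by (simp add: cinner_diff_left cinner_diff_right cinner_scaleC_left cinner_scaleC_right algebra_simps)

lemma cauchy_schwarz_sq: "(cmod (cinner x y))^2 \<le> Re (cinner x x) * Re (cinner y y)"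
proof (cases "y = 0")
  case True thus ?thesis by simp
next
  case False
  define b where "b = Re (cinner y y)"
  have bpos: "b > 0" unfolding b_def using False cinner_self_Re_pos by auto
  have yy: "cinner y y = complex_of_real b" unfolding b_def by (rule cinner_self_real)
  define c where "c = cinner y x"
  have xy: "cinner x y = cnj c" unfolding c_def by (rule cinner_commute)
  define t where "t = c / complex_of_real b"
  have cc: "c * cnj c = complex_of_real ((cmod c)^2)" by (metis complex_norm_square)
  have cc': "cnj c * c = complex_of_real ((cmod c)^2)" using cc by (simp add: mult.commute)
  have bnz: "complex_of_real b \<noteq> 0" using bpos by simp
  have ct: "cnj t = cnj c / complex_of_real b" unfolding t_def by simp
  have e1: "t * cnj c = complex_of_real ((cmod c)^2 / b)"
  proof -
    have "t * cnj c = (c * cnj c) / complex_of_real b" unfolding t_def by simp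
    thus ?thesis using cc by simp
  qed
  have e2: "cnj t * c = complex_of_real ((cmod c)^2 / b)"
  proof -
    have "cnj t * c = (cnj c * c) / complex_of_real b" unfolding ct by simp
    thus ?thesis using cc' by simp
  qed
  have e3: "cnj t * t * complex_of_real b = complex_of_real ((cmod c)^2 / b)"
  proof -
    have "cnj t * t * complex_of_real b = (cnj c * c) / complex_of_real b"
      unfolding ct t_def using bnz by (simp add: divide_simps)
    thus ?thesis using cc' by simp
  qed
  have "0 \<le> Re (cinner (x - scaleC t y) (x - scaleC t y))" by (rule cinner_self_Re_nonneg)
  also have "cinner (x - scaleC t y) (x - scaleC t y) = cinner x x - t * cnj c - cnj t * c + cnj t * t * complex_of_real b"
    using cinner_expand[of x t y] xy yy c_def by simp
  finally have "0 \<le> Re (cinner x x - t * cnj c - cnj t * c + cnj t * t * complex_of_real b)" .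
  hence "0 \<le> Re (cinner x x) - (cmod c)^2 / b" unfolding e1 e2 e3 by simp
  hence "(cmod c)^2 \<le> Re (cinner x x) * b" using bpos by (simp add: field_simps)
  moreover have "cmod (cinner x y) = cmod c" using xy by simp
  ultimately show ?thesis unfolding b_def by simp
qed

lemma cauchy_schwarz: "cmod (cinner x y) \<le> cnorm x * cnorm y"
proof -
  have "(cmod (cinner x y))^2 \<le> (cnorm x * cnorm y)^2"
    using cauchy_schwarz_sq[of x y] by (simp add: power_mult_distrib cnorm_sq)
  thus ?thesis by (rule power2_le_imp_le[OF _ mult_nonneg_nonneg[OF cnorm_nonneg cnorm_nonneg]])
qed

lemma cnorm_triangle: "cnorm (x + y) \<le> cnorm x + cnorm y"
proof -
  have "cinner (x+y) (x+y) = cinner x x + cinner x y + cinner y x + cinner y y"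
    by (simp add: cinner_add_left cinner_add_right)
  hence "Re (cinner (x+y) (x+y)) = Re (cinner x x) + Re (cinner x y) + Re (cinner y x) + Re (cinner y y)"
    by simp
  also have "\<dots> \<le> Re (cinner x x) + cnorm x * cnorm y + cnorm y * cnorm x + Re (cinner y y)"
    using cauchy_schwarz[of x y] cauchy_schwarz[of y x] abs_Re_le_cmod[of "cinner x y"]
      abs_Re_le_cmod[of "cinner y x"] abs_ge_self[of "Re (cinner x y)"] abs_ge_self[of "Re (cinner y x)"]
    by linarith
  also have "\<dots> = (cnorm x + cnorm y)^2" by (simp add: power2_sum cnorm_sq)
  finally have "cnorm (x+y)^2 \<le> (cnorm x + cnorm y)^2" by (simp add: cnorm_sq)
  thus ?thesis by (rule power2_le_imp_le[OF _ add_nonneg_nonneg[OF cnorm_nonneg cnorm_nonneg]])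
qed

lemma cnorm_triangle_diff: "cnorm (x - z) \<le> cnorm (x - y) + cnorm (y - z)"
proof -
  have "x - y + (y - z) = x - z" by simp
  thus ?thesis using cnorm_triangle[of "x - y" "y - z"] by (simp only:)
qed


lemma abs_cnorm[simp]: "\<bar>cnorm x\<bar> = cnorm x"
  using cnorm_nonneg[of x] by simp

lemma proj_identity:
  fixes x y :: "'a::complex_hilbert"
  assumes "y \<noteq> 0"
  defines "t \<equiv> cinner y x / cinner y y"
  shows "Re (cinner (x - scaleC t y) (x - scaleC t y)) = Re (cinner x x) - (cmod (cinner y x))^2 / Re (cinner y y)"
proof -
  define b where "b = Re (cinner y y)"
  have bpos: "b > 0" unfolding b_def using assms cinner_self_Re_pos by auto
  have yy: "cinner y y = complex_of_real b" unfolding b_def by (rule cinner_self_real)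
  define c where "c = cinner y x"
  have xy: "cinner x y = cnj c" unfolding c_def by (rule cinner_commute)
  have tt: "t = c / complex_of_real b" unfolding t_def c_def yy ..
  have cc: "c * cnj c = complex_of_real ((cmod c)^2)" by (metis complex_norm_square)
  have cc': "cnj c * c = complex_of_real ((cmod c)^2)" using cc by (simp add: mult.commute)
  have bnz: "complex_of_real b \<noteq> 0" using bpos by simp
  have ct: "cnj t = cnj c / complex_of_real b" unfolding tt by simp
  have e1: "t * cnj c = complex_of_real ((cmod c)^2 / b)"
  proof -
    have "t * cnj c = (c * cnj c) / complex_of_real b" unfolding tt by simp
    thus ?thesis using cc by simp
  qed
  have e2: "cnj t * c = complex_of_real ((cmod c)^2 / b)"
  proof -
    have "cnj t * c = (cnj c * c) / complex_of_real b" unfolding ct by simp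
    thus ?thesis using cc' by simp
  qed
  have e3: "cnj t * t * complex_of_real b = complex_of_real ((cmod c)^2 / b)"
  proof -
    have "cnj t * t * complex_of_real b = (cnj c * c) / complex_of_real b"
      unfolding ct tt using bnz by (simp add: divide_simps)
    thus ?thesis using cc' by simp
  qed
  have "cinner (x - scaleC t y) (x - scaleC t y) = cinner x x - t * cnj c - cnj t * c + cnj t * t * complex_of_real b"
    using cinner_expand[of x t y] xy yy c_def by simp
  hence "Re (cinner (x - scaleC t y) (x - scaleC t y)) = Re (cinner x x) - (cmod c)^2 / b"
    unfolding e1 e2 e3 by simp
  thus ?thesis unfolding b_def c_def .
qed

lemma parallelogram:
  "cnorm (a + b)^2 + cnorm (a - b)^2 = 2 * cnorm a ^2 + 2 * cnorm b ^2"
proof -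
  have "cinner (a+b) (a+b) + cinner (a-b) (a-b) = cinner a a + cinner a a + cinner b b + cinner b b"
    by (simp add: cinner_add_left cinner_add_right cinner_diff_left cinner_diff_right)
  hence "Re (cinner (a+b) (a+b) + cinner (a-b) (a-b)) = Re (cinner a a + cinner a a + cinner b b + cinner b b)"
    by (rule arg_cong)
  hence "Re (cinner (a+b) (a+b)) + Re (cinner (a-b) (a-b)) = 2 * Re (cinner a a) + 2 * Re (cinner b b)"
    by simp
  thus ?thesis by (simp add: cnorm_sq)
qed

lemma scaleC_two: "scaleC 2 x = x + x"
  using scaleC_add_left[of 1 1 x] by (simp add: scaleC_one)

lemma riesz:
  fixes f :: "'a::complex_hilbert \<Rightarrow> complex"
  assumes add: "\<And>x y. f (x + y) = f x + f y"
    and hom: "\<And>c x. f (scaleC c x) = c * f x"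
    and bnd: "\<And>x. cmod (f x) \<le> K * cnorm x"
  shows "\<exists>u. \<forall>x. f x = cinner u x"
proof (cases "\<forall>x. f x = 0")
  case True thus ?thesis by (intro exI[of _ 0]) simp
next
  case False
  then obtain z0 where z0: "f z0 \<noteq> 0" by auto
  define z where "z = scaleC (1 / f z0) z0"
  have fz: "f z = 1" unfolding z_def hom using z0 by simp
  have f0: "f 0 = 0" using add[of 0 0] by simp
  have fdiff: "f (x - y) = f x - f y" for x y using add[of "x - y" y] by simp
  define N where "N = {n. f n = 0}"
  define S where "S = (\<lambda>n. cnorm (z - n) ^ 2) ` N"
  define d2 where "d2 = Inf S"
  have S_ne: "S \<noteq> {}" unfolding S_def N_def using f0 by auto
  have S_bdd: "bdd_below S" unfolding S_def by (intro bdd_belowI[of _ 0]) auto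
  have d2_le: "d2 \<le> cnorm (z - n) ^ 2" if "n \<in> N" for n
    unfolding d2_def S_def using that S_bdd unfolding S_def by (intro cInf_lower) auto
  have d2_nonneg: "d2 \<ge> 0" unfolding d2_def using S_ne
    by (intro cInf_greatest) (auto simp: S_def)
  have "\<exists>n\<in>N. cnorm (z - n) ^ 2 < d2 + 1 / (real m + 1)" for m
  proof -
    have "Inf S < d2 + 1 / (real m + 1)" unfolding d2_def by simp
    then obtain s where "s \<in> S" "s < d2 + 1 / (real m + 1)"
      using cInf_lessD[OF S_ne] by blast
    thus ?thesis unfolding S_def by auto
  qed
  then obtain ns where ns_N: "\<And>m. ns m \<in> N" and ns_lt: "\<And>m. cnorm (z - ns m) ^ 2 < d2 + 1 / (real m + 1)"
    by metis
  have N_add: "a + b \<in> N" if "a \<in> N" "b \<in> N" for a b using that add unfolding N_def by simp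
  have N_scale: "scaleC c a \<in> N" if "a \<in> N" for a c using that hom unfolding N_def by simp
  have cauchy_bound: "cnorm (ns p - ns q) ^ 2 \<le> 2 / (real p + 1) + 2 / (real q + 1)" for p q
  proof -
    define a where "a = z - ns p"
    define b where "b = z - ns q"
    define mid where "mid = scaleC (1/2) (ns p + ns q)"
    have midN: "mid \<in> N" unfolding mid_def using N_add N_scale ns_N by blast
    have "a + b = scaleC 2 (z - mid)"
    proof -
      have "scaleC 2 mid = ns p + ns q" unfolding mid_def by (simp add: scaleC_scaleC scaleC_one)
      thus ?thesis unfolding a_def b_def by (simp add: scaleC_diff_right scaleC_two algebra_simps)
    qed
    hence "cnorm (a + b) ^ 2 = 4 * cnorm (z - mid) ^ 2" by (simp add: cnorm_scaleC power_mult_distrib)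
    hence ab: "cnorm (a + b) ^ 2 \<ge> 4 * d2" using d2_le[OF midN] by simp
    have "a - b = ns q - ns p" unfolding a_def b_def by simp
    hence "cnorm (ns p - ns q) = cnorm (a - b)" by (simp add: cnorm_minus_commute)
    hence "cnorm (ns p - ns q) ^ 2 = 2 * cnorm a ^ 2 + 2 * cnorm b ^ 2 - cnorm (a + b) ^ 2"
      using parallelogram[of a b] by simp
    also have "\<dots> \<le> 2 * (d2 + 1 / (real p + 1)) + 2 * (d2 + 1 / (real q + 1)) - 4 * d2"
      using ns_lt[of p] ns_lt[of q] ab unfolding a_def b_def by (simp only: distrib_left)
    finally show ?thesis by simp
  qed
  have "\<exists>N. \<forall>m\<ge>N. \<forall>n\<ge>N. cnorm (ns m - ns n) < e" if e: "e > 0" for e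
  proof -
    obtain M :: nat where M: "4 / (e^2) < real M" using reals_Archimedean2 by blast
    have "cnorm (ns m - ns n) < e" if "m \<ge> M" "n \<ge> M" for m n
    proof -
      have Mpos: "real M > 0" using M e by (smt (verit) divide_pos_pos zero_less_power)
      have "2 / (real m + 1) \<le> 2 / (real M + 1)" using that by (intro divide_left_mono) auto
      moreover have "2 / (real n + 1) \<le> 2 / (real M + 1)" using that by (intro divide_left_mono) auto
      moreover have "4 / (real M + 1) < e^2"
      proof -
        have "4 / (real M + 1) < 4 / (4 / e^2)" using M e by (intro divide_strict_left_mono) auto
        thus ?thesis using e by simp
      qed
      ultimately have "cnorm (ns m - ns n) ^ 2 < e ^ 2" using cauchy_bound[of m n] by linarith
      thus ?thesis using e cnorm_nonneg by (meson less_le power_less_imp_less_base)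
    qed
    thus ?thesis by blast
  qed
  hence "\<exists>L. \<forall>e>0. \<exists>N::nat. \<forall>n\<ge>N. sqrt (Re (cinner (ns n - L) (ns n - L))) < e"
    by (intro cinner_complete) (simp add: cnorm_def)
  then obtain L where L: "\<And>e. e > 0 \<Longrightarrow> \<exists>N::nat. \<forall>n\<ge>N. cnorm (ns n - L) < e"
    unfolding cnorm_def by blast
  have Lconv: "(\<lambda>n. cnorm (ns n - L)) \<longlonglongrightarrow> 0"
  proof (rule LIMSEQ_I)
    fix e :: real assume "e > 0"
    then obtain M where "\<forall>n\<ge>M. cnorm (ns n - L) < e" using L by blast
    hence "\<forall>n\<ge>M. norm (cnorm (ns n - L) - 0) < e" by simp
    thus "\<exists>no. \<forall>n\<ge>no. norm (cnorm (ns n - L) - 0) < e" by blast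
  qed
  define K' where "K' = max K 0"
  have bnd': "cmod (f x) \<le> K' * cnorm x" for x
    using bnd[of x] cnorm_nonneg[of x] unfolding K'_def by (smt (verit) mult_right_mono)
  have LN: "L \<in> N"
  proof -
    have "cmod (f L) \<le> K' * cnorm (ns n - L)" for n
    proof -
      have "f L = - f (ns n - L)" using fdiff[of "ns n" L] ns_N[of n] unfolding N_def by simp
      thus ?thesis using bnd'[of "ns n - L"] by simp
    qed
    moreover have "(\<lambda>n. K' * cnorm (ns n - L)) \<longlonglongrightarrow> K' * 0" by (intro tendsto_mult Lconv tendsto_const)
    ultimately have "cmod (f L) \<le> K' * 0" by (intro LIMSEQ_le_const) auto
    thus ?thesis unfolding N_def by simp
  qed
  define u0 where "u0 = z - L"
  have fu0: "f u0 = 1" unfolding u0_def fdiff using fz LN unfolding N_def by simp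
  have u0nz: "u0 \<noteq> 0" using fu0 f0 by auto
  have lim1: "(\<lambda>n. 1 / (real n + 1)) \<longlonglongrightarrow> 0"
  proof -
    have "(\<lambda>n. inverse (real (Suc n))) \<longlonglongrightarrow> 0" by (rule LIMSEQ_inverse_real_of_nat)
    moreover have "(\<lambda>n. inverse (real (Suc n))) = (\<lambda>n. 1 / (real n + 1))"
      by (simp add: inverse_eq_divide add.commute)
    ultimately show ?thesis by simp
  qed
  have u0_le: "cnorm u0 \<le> sqrt d2"
  proof -
    have "cnorm u0 \<le> sqrt (d2 + 1 / (real n + 1)) + cnorm (ns n - L)" for n
    proof -
      have "cnorm u0 \<le> cnorm (z - ns n) + cnorm (ns n - L)" unfolding u0_def by (rule cnorm_triangle_diff)
      moreover have "cnorm (z - ns n) \<le> sqrt (d2 + 1 / (real n + 1))"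
        using ns_lt[of n] cnorm_nonneg by (metis less_le real_le_rsqrt)
      ultimately show ?thesis by simp
    qed
    moreover have "(\<lambda>n. sqrt (d2 + 1 / (real n + 1)) + cnorm (ns n - L)) \<longlonglongrightarrow> sqrt (d2 + 0) + 0"
      by (intro tendsto_add tendsto_real_sqrt tendsto_const Lconv lim1)
    ultimately have "cnorm u0 \<le> sqrt (d2 + 0) + 0" by (intro LIMSEQ_le_const) auto
    thus ?thesis by simp
  qed
  have orth: "cinner v u0 = 0" if vN: "v \<in> N" for v
  proof (cases "v = 0")
    case True thus ?thesis by simp
  next
    case False
    define t where "t = cinner v u0 / cinner v v"
    have "L + scaleC t v \<in> N" using N_add N_scale LN vN by blast
    hence "d2 \<le> cnorm (z - (L + scaleC t v)) ^ 2" by (rule d2_le)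
    also have "z - (L + scaleC t v) = u0 - scaleC t v" unfolding u0_def by simp
    also have "cnorm (u0 - scaleC t v) ^ 2 = Re (cinner u0 u0) - (cmod (cinner v u0))^2 / Re (cinner v v)"
      unfolding cnorm_sq t_def by (rule proj_identity[OF False])
    finally have "d2 \<le> Re (cinner u0 u0) - (cmod (cinner v u0))^2 / Re (cinner v v)" .
    moreover have "Re (cinner u0 u0) \<le> d2"
    proof -
      have "cnorm u0 ^ 2 \<le> (sqrt d2)^2" by (rule power_mono[OF u0_le cnorm_nonneg])
      thus ?thesis using d2_nonneg by (simp add: cnorm_sq)
    qed
    ultimately have "(cmod (cinner v u0))^2 / Re (cinner v v) \<le> 0" by linarith
    moreover have "Re (cinner v v) > 0" using False cinner_self_Re_pos by auto
    ultimately have "(cmod (cinner v u0))^2 \<le> 0" by (simp add: divide_le_0_iff)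
    thus ?thesis by simp
  qed
  define r where "r = cinner u0 u0"
  have rnz: "r \<noteq> 0" unfolding r_def using u0nz cinner_self_eq_zero by auto
  have key: "cinner u0 x = f x * r" for x
  proof -
    have "x - scaleC (f x) u0 \<in> N" unfolding N_def using fdiff hom fu0 by simp
    hence "cinner (x - scaleC (f x) u0) u0 = 0" by (rule orth)
    hence "cinner u0 (x - scaleC (f x) u0) = 0" by (metis cinner_commute complex_cnj_zero)
    thus ?thesis unfolding r_def by (simp add: cinner_diff_right cinner_scaleC_right)
  qed
  show ?thesis
  proof (intro exI allI)
    fix x
    have "cinner (scaleC (cnj (1 / r)) u0) x = (1 / r) * cinner u0 x" by (simp add: cinner_scaleC_left)
    also have "\<dots> = f x" using key rnz by simp
    finally show "f x = cinner (scaleC (cnj (1 / r)) u0) x" by simp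
  qed
qed

lemma adjoint_exists:
  fixes A :: "'a::complex_hilbert \<Rightarrow> 'a"
  assumes "bounded_op A"
  shows "\<exists>B. \<forall>x y. cinner (A x) y = cinner x (B y)"
proof -
  from assms obtain K where add: "\<And>x y. A (x + y) = A x + A y"
    and hom: "\<And>c x. A (scaleC c x) = scaleC c (A x)" and bnd: "\<And>x. cnorm (A x) \<le> K * cnorm x"
    unfolding bounded_op_def by blast
  have "\<exists>u. \<forall>x. cinner y (A x) = cinner u x" for y
  proof (rule riesz[where K = "cnorm y * K"])
    show "cinner y (A (x + x')) = cinner y (A x) + cinner y (A x')" for x x'
      by (simp add: add cinner_add_right)
    show "cinner y (A (scaleC c x)) = c * cinner y (A x)" for c x
      by (simp add: hom cinner_scaleC_right)
    show "cmod (cinner y (A x)) \<le> cnorm y * K * cnorm x" for x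
      using cauchy_schwarz[of y "A x"] bnd[of x] cnorm_nonneg[of y]
      by (smt (verit, ccfv_SIG) mult.assoc mult_left_mono)
  qed
  then obtain B where B: "\<And>y x. cinner y (A x) = cinner (B y) x" by metis
  show ?thesis
  proof (intro exI allI)
    fix x y
    show "cinner (A x) y = cinner x (B y)"
      using B[of y x] cinner_commute[of "A x" y] cinner_commute[of "B y" x] by simp
  qed
qed

lemma adjoint_prop:
  assumes "bounded_op A"
  shows "cinner (A x) y = cinner x (adjoint A y)"
proof -
  from adjoint_exists[OF assms] have "\<exists>B. \<forall>x y. cinner (A x) y = cinner x (B y)" .
  hence "\<forall>x y. cinner (A x) y = cinner x (adjoint A y)" unfolding adjoint_def by (rule someI_ex)
  thus ?thesis by blast
qed


lemma cinner_ext: 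
  fixes a b :: "'a::complex_hilbert"
  assumes "\<And>x. cinner x a = cinner x b" shows "a = b"
proof -
  have "cinner (a - b) (a - b) = 0" using assms[of "a - b"] by (simp add: cinner_diff_right)
  thus ?thesis using cinner_self_eq_zero[of "a - b"] by simp
qed

definition lin_op :: "('a::complex_hilbert \<Rightarrow> 'a) \<Rightarrow> bool" where
  "lin_op B \<longleftrightarrow> (\<forall>x y. B (x + y) = B x + B y) \<and> (\<forall>c x. B (scaleC c x) = scaleC c (B x))"

lemma lin_op_comp: "lin_op B \<Longrightarrow> lin_op C \<Longrightarrow> lin_op (B \<circ> C)"
  unfolding lin_op_def by simp

lemma lin_op_id: "lin_op id"
  unfolding lin_op_def by simp

lemma lin_op_zero: "lin_op B \<Longrightarrow> B 0 = 0"
  unfolding lin_op_def by (metis scaleC_zero_left)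

lemma lin_op_scaleC: "lin_op B \<Longrightarrow> B (scaleC c x) = scaleC c (B x)"
  unfolding lin_op_def by blast

lemma bounded_lin_op: "bounded_op A \<Longrightarrow> lin_op A"
  unfolding bounded_op_def lin_op_def by blast

lemma adjoint_lin_op:
  assumes "bounded_op A" shows "lin_op (adjoint A)"
  unfolding lin_op_def
proof (intro conjI allI)
  fix y y'
  show "adjoint A (y + y') = adjoint A y + adjoint A y'"
    by (rule cinner_ext) (simp add: adjoint_prop[OF assms, symmetric] cinner_add_right)
next
  fix c y
  show "adjoint A (scaleC c y) = scaleC c (adjoint A y)"
    by (rule cinner_ext) (simp add: adjoint_prop[OF assms, symmetric] cinner_scaleC_right)
qed

lemma flip_flip[simp]: "flip_exp (flip_exp t) = t"
  by (cases t) auto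

lemma apply_exp_adj:
  assumes "bounded_op A"
  shows "cinner (apply_exp A t x) y = cinner x (apply_exp A (flip_exp t) y)"
proof (cases t)
  case One thus ?thesis using adjoint_prop[OF assms] by simp
next
  case Star
  have "cinner (adjoint A x) y = cnj (cinner y (adjoint A x))" by (rule cinner_commute)
  also have "\<dots> = cnj (cinner (A y) x)" using adjoint_prop[OF assms] by simp
  also have "\<dots> = cinner x (A y)" using cinner_commute[of x "A y"] by simp
  finally show ?thesis using Star by simp
qed

lemma apply_exp_lin: "bounded_op A \<Longrightarrow> lin_op (apply_exp A t)"
  by (cases t) (auto simp: bounded_lin_op adjoint_lin_op)

lemma eval_word_Nil[simp]: "eval_word A [] = id"
  unfolding eval_word_def by simp

lemma eval_word_Cons[simp]: "eval_word A ((i, t) # u) = apply_exp (A i) t \<circ> eval_word A u"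
  unfolding eval_word_def by simp

lemma eval_word_append: "eval_word A (u @ v) = eval_word A u \<circ> eval_word A v"
proof (induction u)
  case Nil thus ?case by simp
next
  case (Cons a u) thus ?case by (cases a) (simp add: comp_assoc)
qed

lemma word_adj_Nil[simp]: "word_adj [] = []"
  unfolding word_adj_def by simp

lemma word_adj_Cons: "word_adj ((i, t) # u) = word_adj u @ [(i, flip_exp t)]"
  unfolding word_adj_def by simp

lemma word_adj_append: "word_adj (u @ v) = word_adj v @ word_adj u"
  unfolding word_adj_def by simp

lemma word_adj_word_adj[simp]: "word_adj (word_adj u) = u"
  unfolding word_adj_def by (induction u) (auto simp: rev_map)

lemma set_word_adj: "(i, t) \<in> set (word_adj u) \<Longrightarrow> (i, flip_exp t) \<in> set u"
  unfolding word_adj_def by force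

definition good_word :: "(nat \<Rightarrow> ('a::complex_hilbert \<Rightarrow> 'a)) \<Rightarrow> letter list \<Rightarrow> bool" where
  "good_word A u \<longleftrightarrow> (\<forall>(i, t) \<in> set u. bounded_op (A i))"

lemma good_word_adj: "good_word A u \<Longrightarrow> good_word A (word_adj u)"
  unfolding good_word_def using set_word_adj by fast

lemma eval_word_lin: "good_word A u \<Longrightarrow> lin_op (eval_word A u)"
proof (induction u)
  case Nil thus ?case using lin_op_id by (simp add: id_def)
next
  case (Cons a u)
  obtain i t where a: "a = (i, t)" by (cases a)
  from Cons.prems have b: "bounded_op (A i)" and g: "good_word A u" unfolding good_word_def a by auto
  have "lin_op (apply_exp (A i) t \<circ> eval_word A u)"
    by (rule lin_op_comp[OF apply_exp_lin[OF b] Cons.IH[OF g]])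
  thus ?case unfolding a eval_word_Cons .
qed

lemma eval_word_adj:
  "good_word A u \<Longrightarrow> cinner (eval_word A u x) y = cinner x (eval_word A (word_adj u) y)"
proof (induction u arbitrary: x y)
  case Nil thus ?case by simp
next
  case (Cons a u)
  obtain i t where a: "a = (i, t)" by (cases a)
  from Cons.prems have b: "bounded_op (A i)" and g: "good_word A u" unfolding good_word_def a by auto
  have "cinner (eval_word A (a # u) x) y = cinner (apply_exp (A i) t (eval_word A u x)) y"
    unfolding a by simp
  also have "\<dots> = cinner (eval_word A u x) (apply_exp (A i) (flip_exp t) y)"
    by (rule apply_exp_adj[OF b])
  also have "\<dots> = cinner x (eval_word A (word_adj u) (apply_exp (A i) (flip_exp t) y))"
    by (rule Cons.IH[OF g])
  also have "\<dots> = cinner x (eval_word A (word_adj (a # u)) y)"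
    unfolding a word_adj_Cons eval_word_append by simp
  finally show ?case .
qed

lemma scaleC_eq_0: "scaleC c (x::'a::complex_hilbert) = 0 \<Longrightarrow> c \<noteq> 0 \<Longrightarrow> x = 0"
  by (metis scaleC_scaleC scaleC_one scaleC_zero_right nonzero_divide_eq_eq divide_self_if)

lemma rotated_selfadj_real:
  fixes A :: "nat \<Rightarrow> ('a::complex_hilbert \<Rightarrow> 'a)"
  assumes g: "good_word A w"
    and rot: "rotate j w = L @ word_adj L"
    and ev: "eval_word A w x = scaleC mu x" and xnz: "x \<noteq> 0"
  shows "mu \<in> \<real>"
proof (cases "mu = 0")
  case True thus ?thesis by simp
next
  case False
  define n where "n = j mod length w"
  have rw: "rotate j w = drop n w @ take n w" unfolding n_def by (rule rotate_drop_take)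
  have w: "w = take n w @ drop n w" by simp
  define U where "U = eval_word A (take n w)"
  define V where "V = eval_word A (drop n w)"
  have gt: "good_word A (take n w)" and gd: "good_word A (drop n w)"
    using g unfolding good_word_def by (meson in_set_takeD in_set_dropD)+
  have linU: "lin_op U" unfolding U_def by (rule eval_word_lin[OF gt])
  have linV: "lin_op V" unfolding V_def by (rule eval_word_lin[OF gd])
  have UV: "U (V x) = scaleC mu x" using ev unfolding U_def V_def
    by (metis eval_word_append comp_apply w)
  define v where "v = V x"
  have vnz: "v \<noteq> 0"
  proof
    assume "v = 0"
    hence "scaleC mu x = 0" using UV lin_op_zero[OF linU] unfolding v_def by simp
    thus False using False xnz scaleC_eq_0 by blast
  qed
  have VU: "V (U v) = scaleC mu v" unfolding v_def UV using lin_op_scaleC[OF linV] by simp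
  have gr: "good_word A (rotate j w)" using g unfolding good_word_def by simp
  hence gL: "good_word A L" and gL': "good_word A (word_adj L)"
    unfolding rot good_word_def by auto
  have "eval_word A (rotate j w) = V \<circ> U" unfolding rw eval_word_append U_def V_def ..
  hence LL: "eval_word A L (eval_word A (word_adj L) v) = scaleC mu v"
    using VU unfolding rot eval_word_append by (metis comp_apply)
  define y where "y = eval_word A (word_adj L) v"
  have "cinner y y = cinner v (eval_word A (word_adj (word_adj L)) y)"
    unfolding y_def by (rule eval_word_adj[OF gL'])
  also have "\<dots> = cinner v (scaleC mu v)" using LL unfolding y_def by simp
  also have "\<dots> = mu * cinner v v" by (simp add: cinner_scaleC_right)
  finally have eq: "cinner y y = mu * cinner v v" .
  have "mu = cinner y y / cinner v v" using eq vnz cinner_self_eq_zero[of v] by simp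
  also have "\<dots> = complex_of_real (Re (cinner y y) / Re (cinner v v))"
    using cinner_self_real[of y] cinner_self_real[of v] by (metis of_real_divide)
  finally show ?thesis by simp
qed

theorem selfadj_imp_real:
  assumes idx: "\<forall>(i, t) \<in> set w. i < l"
    and fsa: "formally_self_adjoint w"
  shows "real_eigenvalued TYPE('a::complex_hilbert) l w"
  unfolding real_eigenvalued_def
proof (intro allI impI)
  fix A :: "nat \<Rightarrow> ('a \<Rightarrow> 'a)" and mu
  assume bA: "\<forall>i<l. bounded_op (A i)" and ev: "Defs.eigenvalue (eval_word A w) mu"
  have g: "good_word A w" unfolding good_word_def using idx bA by auto
  from fsa obtain j where "let r = rotate j w; L = take (length w div 2) r in r = L @ word_adj L"
    unfolding formally_self_adjoint_def by blast
  then obtain L where rot: "rotate j w = L @ word_adj L" by (auto simp: Let_def)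
  from ev obtain x where "x \<noteq> 0" "eval_word A w x = scaleC mu x" unfolding Defs.eigenvalue_def by blast
  thus "mu \<in> \<real>" using rotated_selfadj_real[OF g rot] by blast
qed


fun flipl :: "letter \<Rightarrow> letter" where "flipl (i, t) = (i, flip_exp t)"

lemma flip_exp_neq: "flip_exp t \<noteq> t" by (cases t) auto
lemma flipl_neq: "flipl a \<noteq> a" by (cases a) (simp add: flip_exp_neq)
lemma flip_exp_flip_exp: "flip_exp (flip_exp t) = t" by (cases t) auto
lemma flipl_flipl[simp]: "flipl (flipl a) = a" by (cases a) (simp add: flip_exp_flip_exp)

definition sucm :: "nat \<Rightarrow> nat \<Rightarrow> nat" where "sucm k p = (p + 1) mod k"
definition predm :: "nat \<Rightarrow> nat \<Rightarrow> nat" where "predm k p = (p + k - 1) mod k"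

lemma sucm_lt: "0 < k \<Longrightarrow> sucm k p < k" unfolding sucm_def by simp
lemma predm_lt: "0 < k \<Longrightarrow> predm k p < k" unfolding predm_def by simp

lemma sucm_predm: "p < k \<Longrightarrow> q < k \<Longrightarrow> (p = sucm k q) \<longleftrightarrow> (q = predm k p)"
  unfolding sucm_def predm_def
  by (smt (verit, ccfv_threshold) Suc_eq_plus1 Suc_pred add_diff_cancel_left' add_diff_cancel_right'
      add_gr_0 less_nat_zero_code mod_Suc mod_add_self2 mod_less not_less_eq zero_less_one)

lemma int_sucm: "0 < k \<Longrightarrow> int (sucm k p) = (int p + 1) mod int k"
  unfolding sucm_def by (simp add: zmod_int add.commute)

lemma int_predm: "0 < k \<Longrightarrow> int (predm k p) = (int p - 1) mod int k"
proof -
  assume k: "0 < k"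
  have "int (predm k p) = int (p + k - 1) mod int k" unfolding predm_def by (simp add: zmod_int)
  also have "int (p + k - 1) = (int p - 1) + int k" using k by simp
  also have "((int p - 1) + int k) mod int k = (int p - 1) mod int k" by simp
  finally show ?thesis .
qed

definition mmul :: "nat \<Rightarrow> (nat \<Rightarrow> nat \<Rightarrow> 'b::comm_semiring_1) \<Rightarrow> (nat \<Rightarrow> nat \<Rightarrow> 'b) \<Rightarrow> nat \<Rightarrow> nat \<Rightarrow> 'b" where
  "mmul k A B p q = (\<Sum>m<k. A p m * B m q)"

definition idm :: "nat \<Rightarrow> nat \<Rightarrow> 'b::comm_semiring_1" where "idm p q = (if p = q then 1 else 0)"

definition Sm :: "letter list \<Rightarrow> letter \<Rightarrow> nat \<Rightarrow> nat \<Rightarrow> real" where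
  "Sm w a p q = (if q = sucm (length w) p \<and> w ! p = a then 1 else 0)"

definition Tm :: "letter list \<Rightarrow> letter \<Rightarrow> nat \<Rightarrow> nat \<Rightarrow> real" where
  "Tm w a p q = (if q = predm (length w) p \<and> w ! (predm (length w) p) = flipl a then 1 else 0)"

fun terms :: "letter list \<Rightarrow> letter list \<Rightarrow> (int \<times> (nat \<Rightarrow> nat \<Rightarrow> real)) list" where
  "terms w [] = [(0, idm)]"
| "terms w (a # u) = map (\<lambda>(r, G). (r + 1, mmul (length w) (Sm w a) G)) (terms w u)
                   @ map (\<lambda>(r, G). (r - 1, mmul (length w) (Tm w a) G)) (terms w u)"

definition xx :: "nat \<Rightarrow> complex" where "xx k = cis (pi / (2 * real k))"

definition Mi :: "letter list \<Rightarrow> nat \<Rightarrow> nat \<Rightarrow> nat \<Rightarrow> complex" where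
  "Mi w i p q = (if q = sucm (length w) p \<and> w ! p = (i, One) then xx (length w) else 0)
              + (if p = sucm (length w) q \<and> w ! q = (i, Star) then cnj (xx (length w)) else 0)"

definition madj :: "(nat \<Rightarrow> nat \<Rightarrow> complex) \<Rightarrow> nat \<Rightarrow> nat \<Rightarrow> complex" where
  "madj M p q = cnj (M q p)"

fun LM :: "letter list \<Rightarrow> letter \<Rightarrow> nat \<Rightarrow> nat \<Rightarrow> complex" where
  "LM w (i, One) = Mi w i"
| "LM w (i, Star) = madj (Mi w i)"

fun WM :: "letter list \<Rightarrow> letter list \<Rightarrow> nat \<Rightarrow> nat \<Rightarrow> complex" where
  "WM w [] = idm"
| "WM w (a # u) = mmul (length w) (LM w a) (WM w u)"

lemma LM_decomp:
  assumes "p < length w" "q < length w"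
  shows "LM w a p q = xx (length w) * complex_of_real (Sm w a p q) + cnj (xx (length w)) * complex_of_real (Tm w a p q)"
proof -
  obtain i t where a: "a = (i, t)" by (cases a)
  have sp: "(p = sucm (length w) q) \<longleftrightarrow> (q = predm (length w) p)" using assms by (rule sucm_predm)
  show ?thesis
  proof (cases t)
    case One
    show ?thesis unfolding a One using sp by (auto simp: Mi_def Sm_def Tm_def)
  next
    case Star
    have sp': "(q = sucm (length w) p) \<longleftrightarrow> (p = predm (length w) q)" using assms sucm_predm by blast
    show ?thesis unfolding a Star using sp by (auto simp: Mi_def Sm_def Tm_def madj_def)
  qed
qed

lemma sum_sum_list_swap:
  "(\<Sum>m\<in>M. sum_list (map (f m) xs)) = sum_list (map (\<lambda>y. \<Sum>m\<in>M. f m y) xs)"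
  by (induction xs) (auto simp: sum.distrib)

lemma sum_list_mult_left: "c * sum_list (map f xs) = sum_list (map (\<lambda>y. c * f y) xs)"
  for c :: "'b::semiring_0"
  by (induction xs) (auto simp: distrib_left)

lemma Im_sum_list: "Im (sum_list (map f xs)) = sum_list (map (\<lambda>y. Im (f y)) xs)"
  by (induction xs) auto

lemma sum_list_nonneg_ge:
  fixes f :: "'b \<Rightarrow> real"
  assumes "\<forall>y\<in>set xs. f y \<ge> 0" "z \<in> set xs"
  shows "f z \<le> sum_list (map f xs)"
  using assms
proof (induction xs)
  case Nil thus ?case by simp
next
  case (Cons y xs)
  have "0 \<le> sum_list (map f xs)" using Cons.prems(1) by (intro sum_list_nonneg) auto
  thus ?case using Cons by auto
qed

definition th :: "nat \<Rightarrow> real" where "th k = pi / (2 * real k)"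

lemma xx_cis: "xx k = cis (th k)" unfolding xx_def th_def ..

lemma WM_decomp:
  assumes "p < length w" "q < length w"
  shows "WM w u p q = sum_list (map (\<lambda>(r, G). cis (real_of_int r * th (length w)) * complex_of_real (G p q)) (terms w u))"
  using assms
proof (induction u arbitrary: p q)
  case Nil thus ?case by (simp add: idm_def)
next
  case (Cons a u)
  define k where "k = length w"
  define c where "c = th k"
  define F where "F = (\<lambda>m q. sum_list (map (\<lambda>(r, G). cis (real_of_int r * c) * complex_of_real (G m q)) (terms w u)))"
  have IH: "\<And>m. m < k \<Longrightarrow> WM w u m q = F m q" using Cons unfolding F_def k_def c_def by blast
  have "WM w (a # u) p q = (\<Sum>m<k. LM w a p m * WM w u m q)" by (simp add: mmul_def k_def)
  also have "\<dots> = (\<Sum>m<k. (cis c * complex_of_real (Sm w a p m) + cnj (cis c) * complex_of_real (Tm w a p m)) * F m q)"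
    by (intro sum.cong refl) (simp add: IH LM_decomp[OF Cons.prems(1)] k_def c_def xx_cis)
  also have "\<dots> = (\<Sum>m<k. sum_list (map (\<lambda>(r, G). cis (real_of_int (r + 1) * c) * complex_of_real (Sm w a p m * G m q)
                                            + cis (real_of_int (r - 1) * c) * complex_of_real (Tm w a p m * G m q)) (terms w u)))"
  proof (intro sum.cong refl)
    fix m
    have e1: "cis (real_of_int (r + 1) * c) = cis c * cis (real_of_int r * c)" for r
      by (simp add: cis_mult distrib_right add.commute)
    have e2: "cis (real_of_int (r - 1) * c) = cnj (cis c) * cis (real_of_int r * c)" for r
      by (simp add: cis_cnj cis_mult left_diff_distrib)
    show "(cis c * complex_of_real (Sm w a p m) + cnj (cis c) * complex_of_real (Tm w a p m)) * F m q =
      sum_list (map (\<lambda>(r, G). cis (real_of_int (r + 1) * c) * complex_of_real (Sm w a p m * G m q)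
                        + cis (real_of_int (r - 1) * c) * complex_of_real (Tm w a p m * G m q)) (terms w u))"
      unfolding F_def e1 e2 mult.commute[of _ "F m q"] F_def sum_list_mult_left[symmetric, where c = "_ :: complex"]
      apply (subst mult.commute)
      apply (subst sum_list_mult_left)
      apply (rule arg_cong[where f = sum_list])
      apply (rule map_cong[OF refl])
      apply (auto simp: algebra_simps)
      done
  qed
  also have "\<dots> = sum_list (map (\<lambda>(r, G). cis (real_of_int (r + 1) * c) * complex_of_real (mmul k (Sm w a) G p q)
                                     + cis (real_of_int (r - 1) * c) * complex_of_real (mmul k (Tm w a) G p q)) (terms w u))"
    unfolding sum_sum_list_swap
    by (rule arg_cong[where f = sum_list], rule map_cong[OF refl])
       (auto simp: mmul_def sum.distrib sum_distrib_left)
  also have "\<dots> = sum_list (map (\<lambda>(r, G). cis (real_of_int r * c) * complex_of_real (G p q)) (terms w (a # u)))"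
    by (simp add: sum_list_addf comp_def case_prod_unfold k_def)
  finally show ?case unfolding k_def c_def .
qed


lemma Sm_nonneg: "Sm w a p q \<ge> 0" unfolding Sm_def by simp
lemma Tm_nonneg: "Tm w a p q \<ge> 0" unfolding Tm_def by simp

lemma mmul_nonneg:
  assumes "\<And>p q. A p q \<ge> (0::real)" "\<And>p q. B p q \<ge> 0"
  shows "mmul k A B p q \<ge> 0"
  unfolding mmul_def using assms by (intro sum_nonneg mult_nonneg_nonneg) auto

lemma terms_nonneg: "(r, G) \<in> set (terms w u) \<Longrightarrow> G p q \<ge> 0"
proof (induction u arbitrary: r G p q)
  case Nil thus ?case by (auto simp: idm_def)
next
  case (Cons a u)
  from Cons.prems obtain r' G' where rG: "(r', G') \<in> set (terms w u)"
    and "G = mmul (length w) (Sm w a) G' \<or> G = mmul (length w) (Tm w a) G'" by auto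
  thus ?case using Cons.IH[OF rG] by (auto intro!: mmul_nonneg Sm_nonneg Tm_nonneg)
qed

lemma mmul_nz:
  assumes "mmul k A B p q \<noteq> (0::real)"
  obtains m where "m < k" "A p m \<noteq> 0" "B m q \<noteq> 0"
proof -
  from assms obtain m where "m \<in> {..<k}" "A p m * B m q \<noteq> 0"
    unfolding mmul_def by (meson sum.not_neutral_contains_not_neutral)
  thus ?thesis using that by auto
qed

lemma Sm_nz: "Sm w a p m \<noteq> 0 \<Longrightarrow> m = sucm (length w) p \<and> w ! p = a"
  unfolding Sm_def by (auto split: if_splits)

lemma Tm_nz: "Tm w a p m \<noteq> 0 \<Longrightarrow> m = predm (length w) p \<and> w ! (predm (length w) p) = flipl a"
  unfolding Tm_def by (auto split: if_splits)

lemma terms_bound: "(r, G) \<in> set (terms w u) \<Longrightarrow> \<bar>r\<bar> \<le> int (length u)"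
proof (induction u arbitrary: r G)
  case Nil thus ?case by simp
next
  case (Cons a u)
  from Cons.prems obtain r' G' where rG: "(r', G') \<in> set (terms w u)"
    and "r = r' + 1 \<or> r = r' - 1" by auto
  thus ?case using Cons.IH[OF rG] by auto
qed

lemma terms_shift:
  assumes "(r, G) \<in> set (terms w u)" "0 < length w" "p < length w" "q < length w" "G p q \<noteq> 0"
  shows "int q mod int (length w) = (int p + r) mod int (length w)"
  using assms
proof (induction u arbitrary: r G p)
  case Nil thus ?case by (auto simp: idm_def split: if_splits)
next
  case (Cons a u)
  define k where "k = length w"
  have k: "0 < k" using Cons.prems k_def by simp
  from Cons.prems(1) obtain r' G' where rG: "(r', G') \<in> set (terms w u)"
    and cases: "(r = r' + 1 \<and> G = mmul k (Sm w a) G') \<or> (r = r' - 1 \<and> G = mmul k (Tm w a) G')"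
    unfolding k_def by auto
  from cases show ?case
  proof
    assume h: "r = r' + 1 \<and> G = mmul k (Sm w a) G'"
    then obtain m where m: "m < k" "Sm w a p m \<noteq> 0" "G' m q \<noteq> 0"
      using Cons.prems(5) by (auto elim: mmul_nz)
    have ms: "m = sucm k p" using Sm_nz[OF m(2)] k_def by simp
    have "int q mod int k = (int m + r') mod int k"
      using Cons.IH[OF rG Cons.prems(2) _ Cons.prems(4) m(3)] m(1) k_def by simp
    also have "\<dots> = ((int p + 1) mod int k + r') mod int k" using int_sucm[OF k] ms by simp
    also have "\<dots> = (int p + 1 + r') mod int k" by (rule mod_add_left_eq)
    also have "int p + 1 + r' = int p + r" using h by simp
    finally show ?thesis unfolding k_def .
  next
    assume h: "r = r' - 1 \<and> G = mmul k (Tm w a) G'"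
    then obtain m where m: "m < k" "Tm w a p m \<noteq> 0" "G' m q \<noteq> 0"
      using Cons.prems(5) by (auto elim: mmul_nz)
    have ms: "m = predm k p" using Tm_nz[OF m(2)] k_def by simp
    have "int q mod int k = (int m + r') mod int k"
      using Cons.IH[OF rG Cons.prems(2) _ Cons.prems(4) m(3)] m(1) k_def by simp
    also have "\<dots> = ((int p - 1) mod int k + r') mod int k" using int_predm[OF k] ms by simp
    also have "\<dots> = (int p - 1 + r') mod int k" by (rule mod_add_left_eq)
    also have "int p - 1 + r' = int p + r" using h by simp
    finally show ?thesis unfolding k_def .
  qed
qed

lemma terms_back:
  assumes "(r, G) \<in> set (terms w u)" "0 < length w" "r = - int (length u)"
    "p < length w" "q < length w" "G p q \<noteq> 0"
  shows "\<forall>j<length u. u ! j = flipl (w ! nat ((int p - int j - 1) mod int (length w)))"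
  using assms
proof (induction u arbitrary: r G p)
  case Nil thus ?case by simp
next
  case (Cons a u)
  define k where "k = length w"
  have k: "0 < k" using Cons.prems k_def by simp
  from Cons.prems(1) obtain r' G' where rG: "(r', G') \<in> set (terms w u)"
    and cases: "(r = r' + 1 \<and> G = mmul k (Sm w a) G') \<or> (r = r' - 1 \<and> G = mmul k (Tm w a) G')"
    unfolding k_def by auto
  have bnd: "\<bar>r'\<bar> \<le> int (length u)" by (rule terms_bound[OF rG])
  have h: "r = r' - 1 \<and> G = mmul k (Tm w a) G'" using cases bnd Cons.prems(3) by auto
  then obtain m where m: "m < k" "Tm w a p m \<noteq> 0" "G' m q \<noteq> 0"
    using Cons.prems(6) by (auto elim: mmul_nz)
  have ms: "m = predm k p" and wa: "w ! (predm k p) = flipl a" using Tm_nz[OF m(2)] k_def by auto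
  have r': "r' = - int (length u)" using h Cons.prems(3) by simp
  have IH: "\<forall>j<length u. u ! j = flipl (w ! nat ((int m - int j - 1) mod int k))"
    using Cons.IH[OF rG Cons.prems(2) r' _ Cons.prems(5) m(3)] m(1) k_def by simp
  have im: "int m = (int p - 1) mod int k" using int_predm[OF k] ms by simp
  show ?case unfolding k_def[symmetric]
  proof (intro allI impI)
    fix j assume j: "j < length (a # u)"
    show "(a # u) ! j = flipl (w ! nat ((int p - int j - 1) mod int k))"
    proof (cases j)
      case 0
      have "nat ((int p - int 0 - 1) mod int k) = predm k p" using int_predm[OF k, of p] by simp
      thus ?thesis using wa 0 by simp
    next
      case (Suc j')
      have j': "j' < length u" using j Suc by simp
      have "(int m - int j' - 1) mod int k = ((int p - 1) mod int k - int j' - 1) mod int k" using im by simp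
      also have "\<dots> = ((int p - 1) mod int k - (int j' + 1)) mod int k" by (simp add: algebra_simps)
      also have "\<dots> = (int p - 1 - (int j' + 1)) mod int k" by (rule mod_diff_left_eq)
      also have "\<dots> = (int p - int j - 1) mod int k" using Suc by simp
      finally show ?thesis using IH j' Suc by simp
    qed
  qed
qed

lemma terms_fwd:
  assumes "0 < length w"
  shows "\<exists>G. (int (length u), G) \<in> set (terms w u) \<and>
     (\<forall>p<length w. (\<forall>j<length u. u ! j = w ! ((p + j) mod length w)) \<longrightarrow> G p ((p + length u) mod length w) \<ge> 1)"
proof (induction u)
  case Nil thus ?case by (auto simp: idm_def)
next
  case (Cons a u)
  define k where "k = length w"
  have k: "0 < k" using assms k_def by simp
  from Cons obtain G where rG: "(int (length u), G) \<in> set (terms w u)"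
    and G: "\<And>p. p < k \<Longrightarrow> (\<forall>j<length u. u ! j = w ! ((p + j) mod k)) \<Longrightarrow> G p ((p + length u) mod k) \<ge> 1"
    unfolding k_def by blast
  define G2 where "G2 = mmul k (Sm w a) G"
  have mem: "(int (length (a # u)), G2) \<in> set (terms w (a # u))"
    using rG unfolding G2_def k_def by force
  have "G2 p ((p + length (a # u)) mod k) \<ge> 1"
    if p: "p < k" and cond: "\<forall>j<length (a # u). (a # u) ! j = w ! ((p + j) mod k)" for p
  proof -
    define m where "m = sucm k p"
    have m: "m < k" unfolding m_def using sucm_lt[OF k] .
    have wa: "w ! p = a" using cond[rule_format, of 0] p by simp
    have Sm1: "Sm w a p m = 1" unfolding Sm_def m_def k_def using wa by simp
    have condu: "\<forall>j<length u. u ! j = w ! ((m + j) mod k)"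
    proof (intro allI impI)
      fix j assume "j < length u"
      hence "u ! j = w ! ((p + Suc j) mod k)" using cond[rule_format, of "Suc j"] by simp
      also have "(p + Suc j) mod k = (m + j) mod k" unfolding m_def sucm_def by (simp add: mod_add_left_eq)
      finally show "u ! j = w ! ((m + j) mod k)" .
    qed
    have idx: "(m + length u) mod k = (p + length (a # u)) mod k"
      unfolding m_def sucm_def by (simp add: mod_add_left_eq)
    have Gm: "G m ((p + length (a # u)) mod k) \<ge> 1" using G[OF m condu] idx by simp
    have "Sm w a p m * G m ((p + length (a # u)) mod k) \<le> G2 p ((p + length (a # u)) mod k)"
      unfolding G2_def mmul_def
      by (rule member_le_sum[where f = "\<lambda>m'. Sm w a p m' * G m' ((p + length (a # u)) mod k)"])
         (auto simp: m intro!: mult_nonneg_nonneg Sm_nonneg terms_nonneg[OF rG])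
    thus ?thesis using Sm1 Gm by simp
  qed
  thus ?case using mem unfolding k_def by blast
qed


lemma length_word_adj[simp]: "length (word_adj u) = length u"
  unfolding word_adj_def by simp

lemma nth_word_adj: "i < length u \<Longrightarrow> word_adj u ! i = flipl (u ! (length u - 1 - i))"
  unfolding word_adj_def by (simp add: rev_nth case_prod_unfold) (metis flipl.simps prod.collapse)

lemma word_adj_append': "word_adj (u @ v) = word_adj v @ word_adj u"
  unfolding word_adj_def by simp

lemma selfadj_split:
  assumes "word_adj u = u" "even (length u)"
  shows "u = take (length u div 2) u @ word_adj (take (length u div 2) u)"
proof -
  define m where "m = length u div 2"
  have lm: "length u - m = m" using assms(2) unfolding m_def by auto
  have "drop m u = drop m (word_adj u)" using assms(1) by simp
  also have "word_adj u = word_adj (drop m u) @ word_adj (take m u)"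
    using word_adj_append'[of "take m u" "drop m u"] by simp
  also have "drop m \<dots> = word_adj (take m u)" using lm by simp
  finally have "drop m u = word_adj (take m u)" .
  hence "u = take m u @ word_adj (take m u)" by (metis append_take_drop_id)
  thus ?thesis unfolding m_def .
qed

lemma mod_eq_iff_dvd_int: "(a::int) mod K = b mod K \<longleftrightarrow> K dvd (a - b)"
  by (simp add: mod_eq_dvd_iff)

lemma back_fsa:
  assumes k0: "0 < length w" and p: "p < length w"
    and h: "\<forall>j<length w. w ! j = flipl (w ! nat ((int p - int j - 1) mod int (length w)))"
  shows "formally_self_adjoint w"
proof -
  define k where "k = length w"
  define K where "K = int k"
  define c where "c = int p - 1"
  have K0: "K > 0" unfolding K_def k_def using k0 by simp
  have hc: "\<And>j. j < k \<Longrightarrow> w ! j = flipl (w ! nat ((c - int j) mod K))"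
    using h unfolding c_def K_def k_def by (simp add: algebra_simps)
  have noq: "\<not> (\<exists>q<k. (2 * int q) mod K = c mod K)"
  proof
    assume "\<exists>q<k. (2 * int q) mod K = c mod K"
    then obtain q where q: "q < k" "(2 * int q) mod K = c mod K" by blast
    have "(c - int q) mod K = (2 * int q - int q) mod K"
      using q(2) by (metis mod_diff_cong)
    also have "\<dots> = int q" using q(1) K0 unfolding K_def by simp
    finally have "nat ((c - int q) mod K) = q" by simp
    hence "w ! q = flipl (w ! q)" using hc[OF q(1)] by simp
    thus False using flipl_neq by metis
  qed
  have keven: "even k"
  proof (rule ccontr)
    assume odd: "odd k"
    define q where "q = nat (((c mod K) * ((K + 1) div 2)) mod K)"
    have qlt: "q < k" unfolding q_def K_def using K0 K_def by (simp add: nat_less_iff)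
    have ev1: "even (K + 1)" using odd unfolding K_def by simp
    have two: "2 * ((K + 1) div 2) = K + 1" by (rule even_two_times_div_two[OF ev1])
    have "(2 * int q) mod K = (2 * ((c mod K) * ((K + 1) div 2))) mod K"
      unfolding q_def using K0 by (simp add: mod_mult_right_eq)
    also have "2 * ((c mod K) * ((K + 1) div 2)) = (c mod K) * (2 * ((K + 1) div 2))"
      by (rule mult.left_commute)
    also have "\<dots> = (c mod K) * K + c mod K"
      unfolding two by (simp add: distrib_left)
    also have "((c mod K) * K + c mod K) mod K = c mod K" by simp
    finally show False using noq qlt by blast
  qed
  have codd: "odd c"
  proof
    assume ceven: "even c"
    define q where "q = nat ((c mod K) div 2)"
    have Keven: "even K" using keven unfolding K_def by simp
    have cme: "even (c mod K)" using dvd_mod[OF ceven Keven] .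
    have m2: "2 * ((c mod K) div 2) = c mod K" by (rule even_two_times_div_two[OF cme])
    have "0 \<le> c mod K" "c mod K < K" using K0 by simp_all
    hence "(c mod K) div 2 < K" "0 \<le> (c mod K) div 2" using m2 by linarith+
    hence qlt: "q < k" unfolding q_def K_def by (simp add: nat_less_iff)
    have "2 * int q = c mod K" unfolding q_def using cme K0 by (simp add: pos_mod_sign)
    hence "(2 * int q) mod K = c mod K" by simp
    thus False using noq qlt by blast
  qed
  define hh where "hh = nat (((c + 1) div 2) mod K)"
  have hlt: "hh < k" unfolding hh_def K_def using K0 K_def by (simp add: nat_less_iff)
  have two_h: "K dvd (c + 1 - 2 * int hh)"
  proof -
    have ev1: "even (c + 1)" using codd by simp
    have e: "2 * ((c + 1) div 2) = c + 1" by (rule even_two_times_div_two[OF ev1])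
    have "int hh = ((c + 1) div 2) mod K" unfolding hh_def using K0 by simp
    hence "(2 * int hh) mod K = (2 * ((c + 1) div 2)) mod K" by (simp add: mod_mult_right_eq)
    hence "(2 * int hh) mod K = (c + 1) mod K" using e by simp
    thus ?thesis by (simp add: mod_eq_iff_dvd_int dvd_diff_commute)
  qed
  define u where "u = rotate hh w"
  have lu: "length u = k" unfolding u_def k_def by simp
  have nth_u: "\<And>i. i < k \<Longrightarrow> u ! i = w ! ((hh + i) mod k)"
    unfolding u_def k_def using k0 by (simp add: nth_rotate)
  have adj: "word_adj u = u"
  proof (rule nth_equalityI)
    show "length (word_adj u) = length u" by simp
    fix i assume "i < length (word_adj u)"
    hence i: "i < k" using lu by simp
    define j where "j = (hh + i) mod k"
    have j: "j < k" unfolding j_def using k0 k_def by simp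
    have gj: "nat ((c - int j) mod K) = (hh + (k - 1 - i)) mod k"
    proof -
      have "(c - int j) mod K = (int hh + int (k - 1 - i)) mod K"
      proof -
        have ij: "int j = (int hh + int i) mod K" unfolding j_def K_def by (simp add: zmod_int)
        have "(c - int j) mod K = (c - (int hh + int i)) mod K"
          unfolding ij by (simp add: mod_diff_right_eq)
        also have "\<dots> = (int hh + int (k - 1 - i)) mod K"
        proof -
          have "int (k - 1 - i) = K - 1 - int i" using i unfolding K_def by simp
          hence eqd: "(c - (int hh + int i)) - (int hh + int (k - 1 - i)) = (c + 1 - 2 * int hh) - K" by simp
          have "K dvd ((c + 1 - 2 * int hh) - K)" using two_h by simp
          thus ?thesis unfolding mod_eq_iff_dvd_int eqd .
        qed
        finally show ?thesis .
      qed
      moreover have "(int hh + int (k - 1 - i)) mod K = int ((hh + (k - 1 - i)) mod k)"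
        unfolding K_def by (simp add: zmod_int)
      ultimately show ?thesis by simp
    qed
    have "word_adj u ! i = flipl (u ! (k - 1 - i))" using nth_word_adj[of i u] i lu by simp
    also have "\<dots> = flipl (w ! ((hh + (k - 1 - i)) mod k))" using nth_u[of "k - 1 - i"] i by simp
    also have "\<dots> = flipl (flipl (w ! j))" using hc[OF j] gj by simp
    also have "\<dots> = u ! i" using nth_u[OF i] unfolding j_def by simp
    finally show "word_adj u ! i = u ! i" .
  qed
  have split: "u = take (length u div 2) u @ word_adj (take (length u div 2) u)"
    by (rule selfadj_split[OF adj]) (simp add: lu keven)
  show ?thesis unfolding formally_self_adjoint_def
  proof (intro conjI exI[of _ hh])
    show "even (length w)" using keven k_def by simp
    show "hh < length w" using hlt k_def by simp
    show "let r = rotate hh w; L = take (length w div 2) r in r = L @ word_adj L"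
      using split unfolding u_def Let_def by simp
  qed
qed

lemma dvd_bound_cases:
  fixes r K :: int
  assumes "K > 0" "K dvd r" "\<bar>r\<bar> \<le> K"
  shows "r = -K \<or> r = 0 \<or> r = K"
proof -
  from assms(2) obtain d where d: "r = K * d" by (auto elim: dvdE)
  have "\<bar>d\<bar> \<le> 1"
  proof (rule ccontr)
    assume "\<not> \<bar>d\<bar> \<le> 1"
    hence "\<bar>d\<bar> \<ge> 2" by simp
    hence "\<bar>r\<bar> \<ge> K * 2" using assms(1) d by (simp add: abs_mult mult_left_mono)
    thus False using assms by simp
  qed
  hence "d = -1 \<or> d = 0 \<or> d = 1" by auto
  thus ?thesis using d by auto
qed

theorem Im_trace_ge1:
  assumes k0: "0 < length w" and nfsa: "\<not> formally_self_adjoint w"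
  shows "Im (\<Sum>p<length w. WM w w p p) \<ge> 1"
proof -
  define k where "k = length w"
  define K where "K = int k"
  define c where "c = th k"
  define ts where "ts = terms w w"
  define phi where "phi = (\<lambda>(r::int, G::nat \<Rightarrow> nat \<Rightarrow> real). sin (real_of_int r * c) * (\<Sum>p<k. G p p))"
  have K0: "K > 0" unfolding K_def k_def using k0 by simp
  have "(\<Sum>p<k. WM w w p p) = (\<Sum>p<k. sum_list (map (\<lambda>(r, G). cis (real_of_int r * c) * complex_of_real (G p p)) ts))"
    by (intro sum.cong refl) (simp add: WM_decomp k_def c_def ts_def)
  also have "\<dots> = sum_list (map (\<lambda>y. \<Sum>p<k. (case y of (r, G) \<Rightarrow> cis (real_of_int r * c) * complex_of_real (G p p))) ts)"
    by (rule sum_sum_list_swap)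
  finally have "Im (\<Sum>p<k. WM w w p p) = sum_list (map (\<lambda>y. Im (\<Sum>p<k. (case y of (r, G) \<Rightarrow> cis (real_of_int r * c) * complex_of_real (G p p)))) ts)"
    by (simp add: Im_sum_list)
  also have "\<dots> = sum_list (map phi ts)"
    by (rule arg_cong[where f = sum_list], rule map_cong[OF refl]) (auto simp: phi_def Im_sum sum_distrib_left)
  finally have eqIm: "Im (\<Sum>p<k. WM w w p p) = sum_list (map phi ts)" .
  have sinK: "sin (real_of_int K * c) = 1"
  proof -
    have "real_of_int K * c = pi / 2" unfolding K_def c_def th_def using k0 k_def by simp
    thus ?thesis by (simp only: sin_pi_half)
  qed
  have nonneg: "phi y \<ge> 0" if y: "y \<in> set ts" for y
  proof -
    obtain r G where yrG: "y = (r, G)" by (cases y)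
    have rG: "(r, G) \<in> set (terms w w)" using y yrG ts_def by simp
    have Gnn: "\<And>p q. G p q \<ge> 0" using terms_nonneg[OF rG] by blast
    show ?thesis
    proof (cases "(\<Sum>p<k. G p p) = 0")
      case True thus ?thesis unfolding yrG phi_def by simp
    next
      case False
      then obtain p where p: "p < k" "G p p \<noteq> 0" by (meson lessThan_iff sum.neutral)
      have "int p mod K = (int p + r) mod K"
        using terms_shift[OF rG k0 _ _ p(2)] p(1) unfolding K_def k_def by simp
      hence dvd: "K dvd r" by (simp add: mod_eq_iff_dvd_int)
      have bnd: "\<bar>r\<bar> \<le> K" using terms_bound[OF rG] unfolding K_def k_def by simp
      from dvd_bound_cases[OF K0 dvd bnd] show ?thesis
      proof (elim disjE)
        assume rK: "r = -K"
        have "\<forall>j<length w. w ! j = flipl (w ! nat ((int p - int j - 1) mod int (length w)))"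
          using terms_back[OF rG k0 _ _ _ p(2)] rK p(1) unfolding K_def k_def by simp
        hence "formally_self_adjoint w" using back_fsa[OF k0] p(1) k_def by blast
        with nfsa show ?thesis by simp
      next
        assume "r = 0" thus ?thesis unfolding yrG phi_def by simp
      next
        assume "r = K"
        thus ?thesis unfolding yrG phi_def using sinK Gnn by (simp add: sum_nonneg)
      qed
    qed
  qed
  obtain Gf where Gf: "(int (length w), Gf) \<in> set (terms w w)"
    and Gfc: "\<forall>p<length w. (\<forall>j<length w. w ! j = w ! ((p + j) mod length w)) \<longrightarrow> Gf p ((p + length w) mod length w) \<ge> 1"
    using terms_fwd[OF k0, of w] by blast
  have G00: "Gf 0 0 \<ge> 1" using Gfc[rule_format, of 0] k0 by simp
  have "phi (K, Gf) = (\<Sum>p<k. Gf p p)" unfolding phi_def using sinK by simp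
  also have "\<dots> \<ge> Gf 0 0"
    using k0 k_def terms_nonneg[OF Gf] by (intro member_le_sum[where f = "\<lambda>p. Gf p p"]) auto
  finally have "phi (K, Gf) \<ge> 1" using G00 by simp
  moreover have "phi (K, Gf) \<le> sum_list (map phi ts)"
    by (rule sum_list_nonneg_ge) (use nonneg Gf in \<open>auto simp: ts_def K_def k_def\<close>)
  ultimately show ?thesis using eqIm k_def by simp
qed


definition mtr :: "complex mat \<Rightarrow> complex" where "mtr M = (\<Sum>i<dim_row M. M $$ (i, i))"

lemma mtr_comm:
  assumes "X \<in> carrier_mat n n" "Y \<in> carrier_mat n n"
  shows "mtr (X * Y) = mtr (Y * X)"
proof -
  have "mtr (X * Y) = (\<Sum>i<n. \<Sum>j<n. X $$ (i, j) * Y $$ (j, i))"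
    using assms unfolding mtr_def
    by (intro sum.cong refl) (auto simp: scalar_prod_def lessThan_atLeast0)
  also have "\<dots> = (\<Sum>j<n. \<Sum>i<n. Y $$ (j, i) * X $$ (i, j))"
    by (subst sum.swap) (simp add: mult.commute)
  also have "\<dots> = mtr (Y * X)"
    using assms unfolding mtr_def
    by (intro sum.cong refl) (auto simp: scalar_prod_def lessThan_atLeast0)
  finally show ?thesis .
qed

lemma sum_list_map_upt: "sum_list (map f [0..<n]) = (\<Sum>i<n. f i)"
  by (induction n) auto

lemma Im_sum_list_c: "Im (sum_list xs) = sum_list (map Im xs)"
  by (induction xs) auto

lemma nonreal_eigen:
  fixes A :: "complex mat"
  assumes A: "A \<in> carrier_mat n n" and im: "Im (\<Sum>i<n. A $$ (i, i)) \<noteq> 0"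
  shows "\<exists>mu v. Im mu \<noteq> 0 \<and> v \<in> carrier_vec n \<and> v \<noteq> 0\<^sub>v n \<and> A *\<^sub>v v = mu \<cdot>\<^sub>v v"
proof -
  obtain es where cp: "char_poly A = (\<Prod>a\<leftarrow>es. [:- a, 1:])" using char_poly_factorized[OF A] by blast
  obtain B P Q where sd: "schur_decomposition A es = (B, P, Q)" by (cases "schur_decomposition A es") auto
  from schur_decomposition[OF A cp sd] have sim: "similar_mat_wit A B P Q" and dg: "diag_mat B = es" by auto
  from sim A have B: "B \<in> carrier_mat n n" and P: "P \<in> carrier_mat n n" and Q: "Q \<in> carrier_mat n n"
    and QP: "Q * P = 1\<^sub>m n" and AP: "A = P * B * Q"
    unfolding similar_mat_wit_def Let_def by auto
  have "mtr A = mtr ((P * B) * Q)" using AP by simp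
  also have "\<dots> = mtr (Q * (P * B))" using P B Q by (intro mtr_comm) auto
  also have "Q * (P * B) = (Q * P) * B" using P B Q by (simp add: assoc_mult_mat)
  also have "\<dots> = B" using QP B by simp
  finally have trAB: "mtr A = mtr B" .
  have "mtr B = sum_list es" unfolding dg[symmetric] diag_mat_def mtr_def using B
    by (simp add: sum_list_map_upt)
  hence eq: "(\<Sum>i<n. A $$ (i, i)) = sum_list es" using trAB A unfolding mtr_def by simp
  have "Im (sum_list es) \<noteq> 0" using im unfolding eq .
  hence "\<exists>e\<in>set es. Im e \<noteq> 0"
    unfolding Im_sum_list_c by (induction es) auto
  then obtain e where e: "e \<in> set es" "Im e \<noteq> 0" by blast
  have "poly (char_poly A) e = 0" unfolding cp poly_prod_list
    using e(1) by (auto simp: prod_list_zero_iff)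
  hence "Char_Poly.eigenvalue A e" using eigenvalue_root_char_poly[OF A] by simp
  then obtain v where "eigenvector A v e" unfolding Char_Poly.eigenvalue_def by blast
  hence "v \<in> carrier_vec n" "v \<noteq> 0\<^sub>v n" "A *\<^sub>v v = e \<cdot>\<^sub>v v" using A unfolding eigenvector_def by auto
  thus ?thesis using e(2) by blast
qed


definition orthonormal_on :: "(nat \<Rightarrow> 'a::complex_hilbert) \<Rightarrow> nat \<Rightarrow> bool" where
  "orthonormal_on e n \<longleftrightarrow> (\<forall>p<n. \<forall>q<n. cinner (e p) (e q) = (if p = q then 1 else 0))"

definition lc :: "(nat \<Rightarrow> 'a::complex_hilbert) \<Rightarrow> nat \<Rightarrow> (nat \<Rightarrow> complex) \<Rightarrow> 'a" where
  "lc e n c = (\<Sum>p<n. scaleC (c p) (e p))"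

lemma cinner_lc_right:
  assumes "orthonormal_on e n" "r < n"
  shows "cinner (e r) (lc e n c) = c r"
proof -
  have "cinner (e r) (lc e n c) = (\<Sum>p<n. c p * cinner (e r) (e p))"
    unfolding lc_def by (simp add: cinner_sum_right cinner_scaleC_right)
  also have "\<dots> = (\<Sum>p<n. if p = r then c p else 0)"
    using assms unfolding orthonormal_on_def by (intro sum.cong refl) auto
  also have "\<dots> = c r" using assms(2) by simp
  finally show ?thesis .
qed

lemma cinner_lc_left: "cinner (lc e n c) y = (\<Sum>p<n. cnj (c p) * cinner (e p) y)"
  unfolding lc_def by (simp add: cinner_sum_left cinner_scaleC_left)

lemma lc_cong: "(\<And>p. p < n \<Longrightarrow> c p = d p) \<Longrightarrow> lc e n c = lc e n d"
  unfolding lc_def by (intro sum.cong) auto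

lemma lc_add: "lc e n (\<lambda>p. c p + d p) = lc e n c + lc e n d"
  unfolding lc_def by (simp add: scaleC_add_left sum.distrib)

lemma lc_scale: "lc e n (\<lambda>p. a * c p) = scaleC a (lc e n c)"
  unfolding lc_def by (simp add: scaleC_sum_right scaleC_scaleC)

lemma orthonormal_inj: "orthonormal_on e n \<Longrightarrow> inj_on e {..<n}"
  unfolding orthonormal_on_def inj_on_def by (metis lessThan_iff zero_neq_one)

lemma exists_orthonormal:
  assumes inf: "infinite_dimensional TYPE('a::complex_hilbert)"
  shows "\<exists>e :: nat \<Rightarrow> 'a. orthonormal_on e n"
proof (induction n)
  case 0 show ?case unfolding orthonormal_on_def by simp
next
  case (Suc n)
  then obtain e :: "nat \<Rightarrow> 'a" where e: "orthonormal_on e n" by blast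
  define B where "B = e ` {..<n}"
  have "finite B" unfolding B_def by simp
  hence "\<not> (\<forall>x. \<exists>c. x = (\<Sum>b\<in>B. scaleC (c b) b))"
    using inf unfolding infinite_dimensional_def by blast
  then obtain x :: 'a where x: "\<And>c. x \<noteq> (\<Sum>b\<in>B. scaleC (c b) b)" by blast
  define y where "y = x - lc e n (\<lambda>p. cinner (e p) x)"
  have ynz: "y \<noteq> 0"
  proof
    assume "y = 0"
    hence "x = (\<Sum>p<n. scaleC (cinner (e p) x) (e p))" unfolding y_def lc_def by simp
    also have "\<dots> = (\<Sum>b\<in>B. scaleC (cinner b x) b)"
      unfolding B_def using sum.reindex[OF orthonormal_inj[OF e], of "\<lambda>b. scaleC (cinner b x) b"]
      by simp
    finally show False using x[of "\<lambda>b. cinner b x"] by simp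
  qed
  have yorth: "cinner (e q) y = 0" if "q < n" for q
    unfolding y_def using cinner_lc_right[OF e that] by (simp add: cinner_diff_right)
  define nr where "nr = cnorm y"
  have nrpos: "nr > 0" unfolding nr_def using ynz cnorm_eq_0 cnorm_nonneg by (metis less_le)
  define e' where "e' = e(n := scaleC (complex_of_real (1 / nr)) y)"
  have "orthonormal_on e' (Suc n)"
    unfolding orthonormal_on_def
  proof (intro allI impI)
    fix p q assume p: "p < Suc n" and q: "q < Suc n"
    have nn: "cinner (e' n) (e' n) = 1"
    proof -
      have "cinner (e' n) (e' n) = complex_of_real (1/nr) * complex_of_real (1/nr) * cinner y y"
        unfolding e'_def by (simp add: cinner_scaleC_left cinner_scaleC_right)
      also have "cinner y y = complex_of_real (nr ^ 2)" unfolding nr_def by (rule cinner_self_cnorm)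
      finally show ?thesis using nrpos by (simp add: power2_eq_square)
    qed
    have qn: "cinner (e q') (e' n) = 0" if "q' < n" for q'
      unfolding e'_def using yorth[OF that] by (simp add: cinner_scaleC_right)
    have nq: "cinner (e' n) (e q') = 0" if "q' < n" for q'
      using qn[OF that] cinner_commute[of "e' n" "e q'"] by simp
    show "cinner (e' p) (e' q) = (if p = q then 1 else 0)"
    proof (cases "p = n")
      case True
      thus ?thesis using nn nq[of q] q by (cases "q = n") (auto simp: e'_def)
    next
      case False
      hence pn: "p < n" using p by simp
      thus ?thesis using qn[OF pn] e q False unfolding orthonormal_on_def e'_def
        by (cases "q = n") auto
    qed
  qed
  thus ?case by blast
qed

definition Top :: "(nat \<Rightarrow> 'a::complex_hilbert) \<Rightarrow> nat \<Rightarrow> (nat \<Rightarrow> nat \<Rightarrow> complex) \<Rightarrow> 'a \<Rightarrow> 'a" where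
  "Top e n M x = lc e n (\<lambda>p. \<Sum>q<n. M p q * cinner (e q) x)"

lemma Top_comp:
  assumes e: "orthonormal_on e n"
  shows "Top e n M (Top e n N x) = Top e n (mmul n M N) x"
  unfolding Top_def
proof (rule lc_cong)
  fix p assume p: "p < n"
  have "(\<Sum>q<n. M p q * cinner (e q) (lc e n (\<lambda>p. \<Sum>q<n. N p q * cinner (e q) x)))
      = (\<Sum>q<n. M p q * (\<Sum>r<n. N q r * cinner (e r) x))"
    by (intro sum.cong refl) (simp add: cinner_lc_right[OF e])
  also have "\<dots> = (\<Sum>r<n. (\<Sum>q<n. M p q * N q r) * cinner (e r) x)"
    by (simp add: sum_distrib_left sum_distrib_right mult.assoc) (rule sum.swap)
  also have "\<dots> = (\<Sum>r<n. mmul n M N p r * cinner (e r) x)" by (simp add: mmul_def)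
  finally show "(\<Sum>q<n. M p q * cinner (e q) (lc e n (\<lambda>p. \<Sum>q<n. N p q * cinner (e q) x)))
      = (\<Sum>r<n. mmul n M N p r * cinner (e r) x)" .
qed

lemma Top_adj_prop:
  "cinner (Top e n M x) y = cinner x (Top e n (madj M) y)"
proof -
  have "cinner (Top e n M x) y = (\<Sum>p<n. \<Sum>q<n. cnj (M p q) * cinner x (e q) * cinner (e p) y)"
    unfolding Top_def cinner_lc_left
    by (intro sum.cong refl) (simp add: sum_distrib_right cinner_commute[of x])
  also have "\<dots> = (\<Sum>q<n. \<Sum>p<n. cnj (M p q) * cinner x (e q) * cinner (e p) y)" by (rule sum.swap)
  also have "\<dots> = cinner x (Top e n (madj M) y)"
    unfolding Top_def lc_def madj_def
    by (simp add: cinner_sum_right cinner_scaleC_right sum_distrib_right sum_distrib_left mult_ac)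
  finally show ?thesis .
qed

lemma adjoint_Top: "adjoint (Top e n M) = Top e n (madj M)"
proof -
  have ex: "\<exists>B. \<forall>x y. cinner (Top e n M x) y = cinner x (B y)"
    using Top_adj_prop by blast
  have "\<forall>x y. cinner (Top e n M x) y = cinner x (adjoint (Top e n M) y)"
    unfolding adjoint_def by (rule someI_ex[OF ex])
  hence "\<And>y. adjoint (Top e n M) y = Top e n (madj M) y"
    by (intro cinner_ext) (simp add: Top_adj_prop)
  thus ?thesis by blast
qed

lemma cnorm_sum_le: "cnorm (sum f A) \<le> (\<Sum>i\<in>A. cnorm (f i))"
proof (induction A rule: infinite_finite_induct)
  case (insert a A)
  thus ?case using cnorm_triangle[of "f a" "sum f A"] by simp
qed simp_all

lemma Top_bounded:
  assumes e: "orthonormal_on e n"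
  shows "bounded_op (Top e n M)"
  unfolding bounded_op_def
proof (intro conjI allI exI)
  fix x y
  show "Top e n M (x + y) = Top e n M x + Top e n M y"
    unfolding Top_def lc_add[symmetric]
    by (rule lc_cong) (simp add: cinner_add_right distrib_left sum.distrib)
next
  fix c x
  show "Top e n M (scaleC c x) = scaleC c (Top e n M x)"
    unfolding Top_def lc_scale[symmetric]
    by (rule lc_cong) (simp add: cinner_scaleC_right sum_distrib_left mult_ac)
next
  fix x
  have ne: "cnorm (e p) = 1" if "p < n" for p
    using e that unfolding orthonormal_on_def cnorm_def by simp
  have "cnorm (Top e n M x) \<le> (\<Sum>p<n. cnorm (scaleC (\<Sum>q<n. M p q * cinner (e q) x) (e p)))"
    unfolding Top_def lc_def by (rule cnorm_sum_le)
  also have "\<dots> = (\<Sum>p<n. cmod (\<Sum>q<n. M p q * cinner (e q) x))"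
    by (intro sum.cong refl) (simp add: cnorm_scaleC ne)
  also have "\<dots> \<le> (\<Sum>p<n. \<Sum>q<n. cmod (M p q) * cnorm x)"
  proof (intro sum_mono)
    fix p
    have "cmod (\<Sum>q<n. M p q * cinner (e q) x) \<le> (\<Sum>q<n. cmod (M p q * cinner (e q) x))"
      by (rule norm_sum)
    also have "\<dots> \<le> (\<Sum>q<n. cmod (M p q) * cnorm x)"
    proof (intro sum_mono)
      fix q assume "q \<in> {..<n}"
      hence "cmod (cinner (e q) x) \<le> cnorm x" using cauchy_schwarz[of "e q" x] ne by simp
      thus "cmod (M p q * cinner (e q) x) \<le> cmod (M p q) * cnorm x"
        by (simp add: norm_mult mult_left_mono)
    qed
    finally show "cmod (\<Sum>q<n. M p q * cinner (e q) x) \<le> (\<Sum>q<n. cmod (M p q) * cnorm x)" .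
  qed
  also have "\<dots> = (\<Sum>p<n. \<Sum>q<n. cmod (M p q)) * cnorm x"
    by (simp add: sum_distrib_right)
  finally show "cnorm (Top e n M x) \<le> (\<Sum>p<n. \<Sum>q<n. cmod (M p q)) * cnorm x" .
qed

lemma Top_eigen:
  assumes e: "orthonormal_on e n" and r: "r < n" "v r \<noteq> 0"
    and ev: "\<And>p. p < n \<Longrightarrow> (\<Sum>q<n. M p q * v q) = mu * v p"
  shows "Defs.eigenvalue (Top e n M) mu"
  unfolding Defs.eigenvalue_def
proof (intro exI conjI)
  show "lc e n v \<noteq> 0"
  proof
    assume "lc e n v = 0"
    hence "cinner (e r) (lc e n v) = 0" by simp
    thus False using cinner_lc_right[OF e r(1)] r(2) by simp
  qed
  show "Top e n M (lc e n v) = scaleC mu (lc e n v)"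
    unfolding Top_def lc_scale[symmetric]
    by (rule lc_cong) (simp add: cinner_lc_right[OF e] ev)
qed


lemma mmul_idm: "q < n \<Longrightarrow> mmul n L idm p q = L p q"
  unfolding mmul_def idm_def by (simp add: if_distrib cong: if_cong)

lemma Top_mmul_idm: "Top e n (mmul n L idm) = Top e n L"
  unfolding Top_def by (intro ext lc_cong sum.cong refl) (simp add: mmul_idm)

lemma apply_exp_Top:
  "apply_exp (Top e n (Mi w i)) t = Top e n (LM w (i, t))"
  by (cases t) (simp_all add: adjoint_Top)

lemma eval_word_Top:
  assumes e: "orthonormal_on e (length w)" and u: "u \<noteq> []"
  shows "eval_word (\<lambda>i. Top e (length w) (Mi w i)) u = Top e (length w) (WM w u)"
  using u
proof (induction u)
  case Nil thus ?case by simp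
next
  case (Cons a u)
  obtain i t where a: "a = (i, t)" by (cases a)
  show ?case
  proof (cases "u = []")
    case True
    show ?thesis unfolding a True
      by (simp add: apply_exp_Top Top_mmul_idm)
  next
    case False
    have "eval_word (\<lambda>i. Top e (length w) (Mi w i)) (a # u)
        = Top e (length w) (LM w a) \<circ> Top e (length w) (WM w u)"
      unfolding a using Cons.IH[OF False] by (simp add: apply_exp_Top)
    also have "\<dots> = Top e (length w) (WM w (a # u))"
      by (rule ext) (simp add: Top_comp[OF e])
    finally show ?thesis .
  qed
qed

theorem nonselfadj_not_real:
  assumes inf: "infinite_dimensional TYPE('a::complex_hilbert)"
    and wne: "w \<noteq> []" and nfsa: "\<not> formally_self_adjoint w"
  shows "\<not> real_eigenvalued TYPE('a) l w"
proof
  assume re: "real_eigenvalued TYPE('a) l w"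
  define n where "n = length w"
  have n0: "0 < n" using wne n_def by simp
  obtain e :: "nat \<Rightarrow> 'a" where e: "orthonormal_on e n" using exists_orthonormal[OF inf] by blast
  define A where "A = (\<lambda>i. Top e n (Mi w i))"
  have bA: "\<forall>i<l. bounded_op (A i)" unfolding A_def using Top_bounded[OF e] by blast
  define P where "P = WM w w"
  define Jm where "Jm = mat n n (\<lambda>(p, q). P p q)"
  have Jc: "Jm \<in> carrier_mat n n" unfolding Jm_def by simp
  have "(\<Sum>i<n. Jm $$ (i, i)) = (\<Sum>i<n. P i i)" unfolding Jm_def by (intro sum.cong refl) simp
  hence "Im (\<Sum>i<n. Jm $$ (i, i)) \<ge> 1" using Im_trace_ge1[OF _ nfsa] n0 unfolding n_def P_def by simp
  hence "Im (\<Sum>i<n. Jm $$ (i, i)) \<noteq> 0" by simp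
  from nonreal_eigen[OF Jc this] obtain mu v where mu: "Im mu \<noteq> 0" and v: "v \<in> carrier_vec n"
    and vnz: "v \<noteq> 0\<^sub>v n" and ev: "Jm *\<^sub>v v = mu \<cdot>\<^sub>v v" by blast
  have "\<exists>r<n. v $ r \<noteq> 0"
  proof (rule ccontr)
    assume "\<not> (\<exists>r<n. v $ r \<noteq> 0)"
    hence "v = 0\<^sub>v n" using v by (intro eq_vecI) auto
    thus False using vnz by simp
  qed
  then obtain r where r: "r < n" "v $ r \<noteq> 0" by blast
  have evp: "(\<Sum>q<n. P p q * v $ q) = mu * v $ p" if p: "p < n" for p
  proof -
    have "(Jm *\<^sub>v v) $ p = (mu \<cdot>\<^sub>v v) $ p" using ev by simp
    moreover have "(Jm *\<^sub>v v) $ p = (\<Sum>q<n. P p q * v $ q)"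
      using p v unfolding Jm_def by (simp add: scalar_prod_def lessThan_atLeast0)
    moreover have "(mu \<cdot>\<^sub>v v) $ p = mu * v $ p" using p v by simp
    ultimately show ?thesis by simp
  qed
  have "Defs.eigenvalue (Top e n P) mu"
    by (rule Top_eigen[OF e r evp])
  moreover have "eval_word A w = Top e n P"
    unfolding A_def P_def n_def using eval_word_Top[OF _ wne] e n_def by simp
  ultimately have "Defs.eigenvalue (eval_word A w) mu" by simp
  hence "mu \<in> \<real>" using re bA unfolding real_eigenvalued_def by blast
  thus False using mu by (simp add: complex_is_Real_iff)
qed

theorem mainTheorem7:
  fixes l :: nat and w :: "letter list"
  assumes "infinite_dimensional TYPE('a::complex_hilbert)"
    and "w \<noteq> []"
    and "\<forall>(i, t) \<in> set w. i < l"
  shows "real_eigenvalued TYPE('a) l w \<longleftrightarrow> formally_self_adjoint w"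
  using selfadj_imp_real[OF assms(3)] nonselfadj_not_real[OF assms(1,2)] by blast


end
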